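(* There exist preference-based argumentation frameworks $AF_p=(AR,Attacks,Prefs)$ and $AF'_p=(AR',Attacks',Prefs')$ with $AF_p\preceq_{RMP}AF'_p$ such that $\tau_{preferred}(AF'_p)\subseteq AR$ but $\tau_{preferred}(AF'_p)\neq\tau_{preferred}(AF_p)$.
   Context: A preference-based argumentation framework is a triple $(AR,Attacks,Prefs)$ where $AR$ is a finite set of arguments, $Attacks\subseteq AR\times AR$ (with $(b,a)\in Attacks$ read "$b$ attacks $a$"), and $Prefs$ is a partial or total ordering on $AR$, written $a\succeq b$. $\tau_{preferred}(AF_p)=\{a\in AR: \text{for every } b\in AR,\ (b,a)\in Attacks\text{ implies } a\succeq b\}$. $AF_p\preceq_{NP}AF'_p$ (normal expansion) iff $AR\subseteq AR'$, $Attacks\subseteq Attacks'$, every $(a,b)\in Attacks'\setminus Attacks$ has $a\in AR'\setminus AR$ or $b\in AR'\setminus AR$, $Prefs\subseteq Prefs'$, and every $(a\succeq b)\in Prefs'\setminus Prefs$ has $a\in AR'\setminus AR$ or $b\in AR'\setminus AR$. An attack sequence in $(AR,Attacks)$ is $\langle a_1,\dots,a_n\rangle$ of pairwise distinct arguments with $(a_i,a_{i+1})\in Attacks$; $b$ is reachable from $a$ iff such a sequence has $a_1=a$, $a_n=b$. An attack cycle is $\langle a_1,\dots,a_n\rangle$ with $(a_i,a_{i+1})\in Attacks$, $a_1=a_n$ and $a_1,\dots,a_{n-1}$ pairwise distinct; $\mathcal C(AR,Attacks)$ is the set of attack cycles. $AF_p\preceq_{RMP}AF'_p$ (rational man's expansion)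 iff $AF_p\preceq_{NP}AF'_p$, $\mathcal C(AR',Attacks')=\mathcal C(AR,Attacks)$, and for all $a\in AR$, $b\in AR'\setminus AR$ with $b$ reachable from $a$ in $(AR',Attacks')$, $a$ occurs in no attack cycle of $(AR',Attacks')$. *)

theory Defs
  imports Main
begin

text \<open>A pair (b,a) in Attacks means b attacks a; a pair (a,b) in Prefs means a is
  at least as preferred as b.\<close>

definition is_paf :: "'a set \<Rightarrow> ('a \<times> 'a) set \<Rightarrow> ('a \<times> 'a) set \<Rightarrow> bool" where
  "is_paf AR Att Prefs \<longleftrightarrow> finite AR \<and> Att \<subseteq> AR \<times> AR \<and> Prefs \<subseteq> AR \<times> AR
     \<and> partial_order_on AR Prefs"

definition tau_preferred :: "'a set \<Rightarrow> ('a \<times> 'a) set \<Rightarrow> ('a \<times> 'a) set \<Rightarrow> 'a set" where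
  "tau_preferred AR Att Prefs = {a \<in> AR. \<forall>b \<in> AR. (b, a) \<in> Att \<longrightarrow> (a, b) \<in> Prefs}"

definition normal_exp ::
  "'a set \<Rightarrow> ('a \<times> 'a) set \<Rightarrow> ('a \<times> 'a) set \<Rightarrow> 'a set \<Rightarrow> ('a \<times> 'a) set \<Rightarrow> ('a \<times> 'a) set \<Rightarrow> bool" where
  "normal_exp AR Att Prefs AR' Att' Prefs' \<longleftrightarrow>
     AR \<subseteq> AR' \<and> Att \<subseteq> Att' \<and>
     (\<forall>(a, b) \<in> Att' - Att. a \<in> AR' - AR \<or> b \<in> AR' - AR) \<and>
     Prefs \<subseteq> Prefs' \<and>
     (\<forall>(a, b) \<in> Prefs' - Prefs. a \<in> AR' - AR \<or> b \<in> AR' - AR)"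

definition attack_seq :: "'a set \<Rightarrow> ('a \<times> 'a) set \<Rightarrow> 'a list \<Rightarrow> bool" where
  "attack_seq AR Att s \<longleftrightarrow> s \<noteq> [] \<and> set s \<subseteq> AR \<and> distinct s \<and>
     (\<forall>i. Suc i < length s \<longrightarrow> (s ! i, s ! Suc i) \<in> Att)"

definition reachable :: "'a set \<Rightarrow> ('a \<times> 'a) set \<Rightarrow> 'a \<Rightarrow> 'a \<Rightarrow> bool" where
  "reachable AR Att a b \<longleftrightarrow> (\<exists>s. attack_seq AR Att s \<and> hd s = a \<and> last s = b)"

definition attack_cycles :: "'a set \<Rightarrow> ('a \<times> 'a) set \<Rightarrow> 'a list set" where
  "attack_cycles AR Att = {c. 2 \<le> length c \<and> set c \<subseteq> AR \<and> hd c = last c \<and>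
     distinct (butlast c) \<and> (\<forall>i. Suc i < length c \<longrightarrow> (c ! i, c ! Suc i) \<in> Att)}"

definition rm_exp ::
  "'a set \<Rightarrow> ('a \<times> 'a) set \<Rightarrow> ('a \<times> 'a) set \<Rightarrow> 'a set \<Rightarrow> ('a \<times> 'a) set \<Rightarrow> ('a \<times> 'a) set \<Rightarrow> bool" where
  "rm_exp AR Att Prefs AR' Att' Prefs' \<longleftrightarrow>
     normal_exp AR Att Prefs AR' Att' Prefs' \<and>
     attack_cycles AR' Att' = attack_cycles AR Att \<and>
     (\<forall>a \<in> AR. \<forall>b \<in> AR' - AR. reachable AR' Att' a b \<longrightarrow>
        (\<forall>c \<in> attack_cycles AR' Att'. a \<notin> set c))"

end

theory Submission
  imports Defs
begin

lemma incr_chain: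
  assumes "Att \<subseteq> {(a,b). a < (b::nat)}"
    and "\<forall>i. Suc i < length c \<longrightarrow> (c ! i, c ! Suc i) \<in> Att"
  shows "0 < k \<Longrightarrow> k < length c \<Longrightarrow> c ! 0 < c ! k"
proof (induction k)
  case 0 then show ?case by simp
next
  case (Suc k)
  have "c ! k < c ! Suc k" using assms Suc.prems by blast
  then show ?case using Suc by (cases k) auto
qed

lemma no_cycles:
  assumes "Att \<subseteq> {(a,b). a < (b::nat)}"
  shows "attack_cycles AR Att = {}"
proof -
  { fix c assume c: "c \<in> attack_cycles AR Att"
    hence l: "2 \<le> length c" "hd c = last c"
      and e: "\<forall>i. Suc i < length c \<longrightarrow> (c ! i, c ! Suc i) \<in> Att"
      by (auto simp: attack_cycles_def)
    have "c ! 0 < c ! (length c - 1)"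
      using incr_chain[OF assms e, of "length c - 1"] l by simp
    moreover have "hd c = c ! 0" "last c = c ! (length c - 1)"
      using l(1) by (metis hd_conv_nth last_conv_nth list.size(3) not_numeral_le_zero)+
    ultimately have False using l by simp }
  thus ?thesis by blast
qed

theorem proposition50:
  shows "\<exists>(AR :: nat set) Att Prefs AR' Att' Prefs'.
    is_paf AR Att Prefs \<and> is_paf AR' Att' Prefs' \<and>
    rm_exp AR Att Prefs AR' Att' Prefs' \<and>
    tau_preferred AR' Att' Prefs' \<subseteq> AR \<and>
    tau_preferred AR' Att' Prefs' \<noteq> tau_preferred AR Att Prefs"
proof -
  let ?AR = "{0::nat, 2}" and ?AR' = "{0::nat,1,2}"
  let ?Att = "{} :: (nat\<times>nat) set" and ?Att' = "{(0::nat,1::nat),(1,2)}"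
  have c1: "attack_cycles ?AR ?Att = {}" by (rule no_cycles) auto
  have c2: "attack_cycles ?AR' ?Att' = {}" by (rule no_cycles) auto
  have p1: "is_paf ?AR ?Att (Id_on ?AR)"
    unfolding is_paf_def by (auto simp: partial_order_on_def preorder_on_def refl_on_def trans_def antisym_def Id_on_def)
  have p2: "is_paf ?AR' ?Att' (Id_on ?AR')"
    unfolding is_paf_def by (auto simp: partial_order_on_def preorder_on_def refl_on_def trans_def antisym_def Id_on_def)
  have r: "rm_exp ?AR ?Att (Id_on ?AR) ?AR' ?Att' (Id_on ?AR')"
    unfolding rm_exp_def normal_exp_def c1 c2 by auto
  have t1: "tau_preferred ?AR' ?Att' (Id_on ?AR') = {0}"
    unfolding tau_preferred_def by auto
  have t2: "tau_preferred ?AR ?Att (Id_on ?AR) = {0,2}"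
    unfolding tau_preferred_def by auto
  show ?thesis
    apply (rule exI[of _ ?AR], rule exI[of _ ?Att], rule exI[of _ "Id_on ?AR"])
    apply (rule exI[of _ ?AR'], rule exI[of _ ?Att'], rule exI[of _ "Id_on ?AR'"])
    using p1 p2 r t1 t2 by auto
qed

end
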